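(* $PF<_c FLO$, i.e. $PF\le_c FLO$ and $FLO\not\le_c PF$.
   Context: Conventions: every structure is for a finite relational language and has universe a subset of $\omega$; a class of structures is a collection of structures for one fixed finite relational language closed under isomorphism. $D(\mathcal{A})$ is the atomic diagram of $\mathcal{A}$. A computable transformation from $K$ to $K'$ is a c.e. set $\Phi$ of pairs $(\alpha,\varphi)$, $\alpha$ a finite subset of the atomic diagram of a finite structure in the language of $K$, $\varphi$ an atomic sentence or negation of one in the language of $K'$, such that for every $\mathcal{A}\in K$, $\{\varphi:(\exists\alpha\subseteq D(\mathcal{A}))(\alpha,\varphi)\in\Phi\}=D(\mathcal{B})$ for some $\mathcal{B}\in K'$, written $\Phi(\mathcal{A})=\mathcal{B}$. A computable embedding is a computable transformation with $\mathcal{A}\cong\mathcal{A}'\iff\Phi(\mathcal{A})\cong\Phi(\mathcal{A}')$ for all $\mathcal{A},\mathcal{A}'\in K$. $K\le_c K'$ means a computable embedding of $K$ into $K'$ exists; $K<_c K'$ means $K\le_c K'$ and $K'\not\le_c K$. $PF$ is the class of all finite fields of prime order (with addition, multiplication, $0$, $1$ represented by relations: graphs of the operations and unary predicates). $FLO$ is the class of all finite linear orders (language $\{<\}$). *)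

theory Defs
  imports Main "HOL-Library.Nat_Bijection" "HOL-Computational_Algebra.Primes"
begin

datatype recf = Zr | Sc | Pj nat | Cn recf "recf list" | Pr recf recf | Mn recf

inductive recf_eval :: "recf \<Rightarrow> nat list \<Rightarrow> nat \<Rightarrow> bool" where
  ev_Zr: "recf_eval Zr xs 0"
| ev_Sc: "recf_eval Sc (x # xs) (Suc x)"
| ev_Pj: "i < length xs \<Longrightarrow> recf_eval (Pj i) xs (xs ! i)"
| ev_Cn: "length ys = length gs \<Longrightarrow> (\<forall>i<length gs. recf_eval (gs ! i) xs (ys ! i))
          \<Longrightarrow> recf_eval f ys z \<Longrightarrow> recf_eval (Cn f gs) xs z"
| ev_Pr0: "recf_eval f xs y \<Longrightarrow> recf_eval (Pr f g) (0 # xs) y"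
| ev_PrS: "recf_eval (Pr f g) (n # xs) y \<Longrightarrow> recf_eval g (n # y # xs) z
          \<Longrightarrow> recf_eval (Pr f g) (Suc n # xs) z"
| ev_Mn: "recf_eval f (n # xs) 0 \<Longrightarrow> (\<forall>m<n. \<exists>y. recf_eval f (m # xs) y \<and> 0 < y)
          \<Longrightarrow> recf_eval (Mn f) xs n"

definition ce :: "nat set \<Rightarrow> bool" where
  "ce S \<longleftrightarrow> (\<exists>f. S = {n. \<exists>y. recf_eval f [n] y})"

text \<open>A language is the list of arities of its relation symbols (symbol i has arity L!i).\<close>
type_synonym lang = "nat list"

record strc =
  univ :: "nat set"
  rel :: "nat \<Rightarrow> nat list set"

definition tuples :: "nat set \<Rightarrow> nat \<Rightarrow> nat list set" where
  "tuples U n = {xs. length xs = n \<and> set xs \<subseteq> U}"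

definition is_struct :: "lang \<Rightarrow> strc \<Rightarrow> bool" where
  "is_struct L A \<longleftrightarrow> univ A \<noteq> {} \<and>
     (\<forall>i<length L. rel A i \<subseteq> tuples (univ A) (L ! i)) \<and>
     (\<forall>i. length L \<le> i \<longrightarrow> rel A i = {})"

definition iso :: "lang \<Rightarrow> strc \<Rightarrow> strc \<Rightarrow> bool" where
  "iso L A B \<longleftrightarrow> (\<exists>f. bij_betw f (univ A) (univ B) \<and>
     (\<forall>i<length L. \<forall>xs\<in>tuples (univ A) (L ! i). xs \<in> rel A i \<longleftrightarrow> map f xs \<in> rel B i))"

text \<open>Atomic sentences, with constants for the natural numbers: equalities and relation atoms.
  A literal is a pair (polarity, atom): True = the atom, False = its negation.\<close>
datatype atom = Eq nat nat | Rl nat "nat list"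

type_synonym lit = "bool \<times> atom"

fun lang_lit :: "lang \<Rightarrow> lit \<Rightarrow> bool" where
  "lang_lit L (b, Eq a c) = True"
| "lang_lit L (b, Rl i xs) = (i < length L \<and> length xs = L ! i)"

definition diagram :: "lang \<Rightarrow> strc \<Rightarrow> lit set" where
  "diagram L A =
     {(True, Eq a a) | a. a \<in> univ A}
   \<union> {(False, Eq a c) | a c. a \<in> univ A \<and> c \<in> univ A \<and> a \<noteq> c}
   \<union> {(True, Rl i xs) | i xs. i < length L \<and> xs \<in> tuples (univ A) (L ! i) \<and> xs \<in> rel A i}
   \<union> {(False, Rl i xs) | i xs. i < length L \<and> xs \<in> tuples (univ A) (L ! i) \<and> xs \<notin> rel A i}"

fun atom_code :: "atom \<Rightarrow> nat" where
  "atom_code (Eq a c) = sum_encode (Inl (prod_encode (a, c)))"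
| "atom_code (Rl i xs) = sum_encode (Inr (prod_encode (i, list_encode xs)))"

definition lit_code :: "lit \<Rightarrow> nat" where
  "lit_code l = prod_encode (if fst l then 1 else 0, atom_code (snd l))"

definition pair_code :: "lit set \<times> lit \<Rightarrow> nat" where
  "pair_code p = prod_encode (set_encode (lit_code ` fst p), lit_code (snd p))"

definition apply_trans :: "(lit set \<times> lit) set \<Rightarrow> lang \<Rightarrow> strc \<Rightarrow> lit set" where
  "apply_trans \<Phi> L A = {\<phi>. \<exists>\<alpha>. \<alpha> \<subseteq> diagram L A \<and> (\<alpha>, \<phi>) \<in> \<Phi>}"

definition comp_trans ::
  "strc set \<Rightarrow> lang \<Rightarrow> strc set \<Rightarrow> lang \<Rightarrow> (lit set \<times> lit) set \<Rightarrow> bool" where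
  "comp_trans K L K' L' \<Phi> \<longleftrightarrow>
     ce (pair_code ` \<Phi>) \<and>
     (\<forall>(\<alpha>, \<phi>)\<in>\<Phi>. finite \<alpha> \<and>
        (\<exists>F. is_struct L F \<and> finite (univ F) \<and> \<alpha> \<subseteq> diagram L F) \<and> lang_lit L' \<phi>) \<and>
     (\<forall>A\<in>K. \<exists>B\<in>K'. apply_trans \<Phi> L A = diagram L' B)"

definition comp_emb ::
  "strc set \<Rightarrow> lang \<Rightarrow> strc set \<Rightarrow> lang \<Rightarrow> (lit set \<times> lit) set \<Rightarrow> bool" where
  "comp_emb K L K' L' \<Phi> \<longleftrightarrow> comp_trans K L K' L' \<Phi> \<and>
     (\<forall>A\<in>K. \<forall>A'\<in>K. \<forall>B\<in>K'. \<forall>B'\<in>K'.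
        apply_trans \<Phi> L A = diagram L' B \<longrightarrow> apply_trans \<Phi> L A' = diagram L' B' \<longrightarrow>
        (iso L A A' \<longleftrightarrow> iso L' B B'))"

definition c_le :: "strc set \<Rightarrow> lang \<Rightarrow> strc set \<Rightarrow> lang \<Rightarrow> bool" where
  "c_le K L K' L' \<longleftrightarrow> (\<exists>\<Phi>. comp_emb K L K' L' \<Phi>)"

definition c_lt :: "strc set \<Rightarrow> lang \<Rightarrow> strc set \<Rightarrow> lang \<Rightarrow> bool" where
  "c_lt K L K' L' \<longleftrightarrow> c_le K L K' L' \<and> \<not> c_le K' L' K L"

text \<open>Language of fields: 0 = graph of +, 1 = graph of *, 2 = {0}, 3 = {1}.\<close>
definition L_PF :: lang where "L_PF = [3, 3, 1, 1]"

definition Zp :: "nat \<Rightarrow> strc" where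
  "Zp p = \<lparr> univ = {0..<p},
     rel = (\<lambda>i. if i = 0 then {[a, b, (a + b) mod p] | a b. a < p \<and> b < p}
              else if i = 1 then {[a, b, (a * b) mod p] | a b. a < p \<and> b < p}
              else if i = 2 then {[0]}
              else if i = 3 then {[1]}
              else {}) \<rparr>"

definition PF :: "strc set" where
  "PF = {A. is_struct L_PF A \<and> (\<exists>p::nat. prime p \<and> iso L_PF (Zp p) A)}"

definition L_FLO :: lang where "L_FLO = [2]"

definition FLO :: "strc set" where
  "FLO = {A. is_struct L_FLO A \<and> finite (univ A) \<and>
     (\<forall>a\<in>univ A. [a, a] \<notin> rel A 0) \<and>
     (\<forall>a\<in>univ A. \<forall>b\<in>univ A. \<forall>c\<in>univ A. [a, b] \<in> rel A 0 \<longrightarrow> [b, c] \<in> rel A 0 \<longrightarrow> [a, c] \<in> rel A 0) \<and>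
     (\<forall>a\<in>univ A. \<forall>b\<in>univ A. a = b \<or> [a, b] \<in> rel A 0 \<or> [b, a] \<in> rel A 0)}"

end

theory Submission
  imports Defs
begin

lemma recf_det: "recf_eval f xs y \<Longrightarrow> recf_eval f xs z \<Longrightarrow> y = z"
proof (induction f xs y arbitrary: z rule: recf_eval.induct)
  case (ev_Zr xs) from ev_Zr.prems show ?case by (cases rule: recf_eval.cases) (use ev_Zr in auto)
next
  case (ev_Sc x xs) from ev_Sc.prems show ?case by (cases rule: recf_eval.cases) (use ev_Sc in auto)
next
  case (ev_Pj i xs) from ev_Pj.prems show ?case by (cases rule: recf_eval.cases) (use ev_Pj in auto)
next
  case (ev_Cn ys gs xs f z0)
  from ev_Cn.prems show ?case
  proof (cases rule: recf_eval.cases)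
    case (ev_Cn ys')
    have "ys' = ys"
      by (rule nth_equalityI) (use ev_Cn ev_Cn.hyps ev_Cn.IH in auto)
    then show ?thesis using ev_Cn ev_Cn.IH by auto
  qed
next
  case (ev_Pr0 f xs y g) from ev_Pr0.prems show ?case by (cases rule: recf_eval.cases) (use ev_Pr0 in auto)
next
  case (ev_PrS f g n xs y z0) 
  from ev_PrS.prems show ?case by (cases rule: recf_eval.cases) (use ev_PrS in fastforce)+
next
  case (ev_Mn f n xs)
  note IH1 = ev_Mn.IH(1) and IH2 = ev_Mn.IH(2) and H = ev_Mn.hyps
  from ev_Mn.prems show ?case
  proof (cases rule: recf_eval.cases)
    case ev_Mn
    show ?thesis
    proof (rule linorder_cases[of n z])
      assume "n < z"
      then obtain y where "recf_eval f (n # xs) y" "0 < y" using ev_Mn by auto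
      then show ?thesis using IH1 by fastforce
    next
      assume "z < n"
      then obtain y where "(recf_eval f (z # xs) y \<and> (\<forall>w. recf_eval f (z # xs) w \<longrightarrow> y = w))" "0 < y"
        using IH2 by blast
      then show ?thesis using ev_Mn by fastforce
    qed (use ev_Mn in auto)
  qed
qed


lemma ev_Cn1: "recf_eval f [y1] z \<Longrightarrow> recf_eval g1 xs y1 \<Longrightarrow> recf_eval (Cn f [g1]) xs z"
  by (rule ev_Cn[where ys="[y1]"]) (auto simp: less_Suc_eq)
lemma ev_Cn2: "recf_eval f [y1,y2] z \<Longrightarrow> recf_eval g1 xs y1 \<Longrightarrow> recf_eval g2 xs y2
   \<Longrightarrow> recf_eval (Cn f [g1,g2]) xs z"
  by (rule ev_Cn[where ys="[y1,y2]"]) (auto simp: less_Suc_eq nth_Cons split: nat.splits)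
lemma ev_Cn3: "recf_eval f [y1,y2,y3] z \<Longrightarrow> recf_eval g1 xs y1 \<Longrightarrow> recf_eval g2 xs y2
   \<Longrightarrow> recf_eval g3 xs y3 \<Longrightarrow> recf_eval (Cn f [g1,g2,g3]) xs z"
  by (rule ev_Cn[where ys="[y1,y2,y3]"]) (auto simp: less_Suc_eq nth_Cons split: nat.splits)

lemma ev_P0: "recf_eval (Pj 0) (x # xs) x" using ev_Pj[of 0 "x#xs"] by simp
lemma ev_P1: "recf_eval (Pj 1) (x # y # xs) y" using ev_Pj[of 1 "x#y#xs"] by simp
lemma ev_P2: "recf_eval (Pj 2) (x # y # w # xs) w" using ev_Pj[of 2 "x#y#w#xs"] by simp
lemma ev_P3: "recf_eval (Pj 3) (x # y # w # u # xs) u" using ev_Pj[of 3 "x#y#w#u#xs"] by simp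

lemma ev_eq: "recf_eval f xs y \<Longrightarrow> y = z \<Longrightarrow> recf_eval f xs z" by simp

definition "ONE = Cn Sc [Zr]"
lemma ev_ONE: "recf_eval ONE xs 1"
  unfolding ONE_def by (rule ev_Cn1) (auto intro: ev_Zr ev_Sc[of 0 "[]", simplified])

definition "ADD = Pr (Pj 0) (Cn Sc [Pj 1])"
lemma ev_ADD: "recf_eval ADD [n, x] (n + x)"
proof (induction n)
  case 0 show ?case unfolding ADD_def by (rule ev_Pr0) (simp add: ev_P0[of x "[]", simplified])
next
  case (Suc n) show ?case unfolding ADD_def
    by (rule ev_PrS[OF Suc[unfolded ADD_def]], rule ev_eq, rule ev_Cn1, rule ev_Sc, rule ev_P1, simp)
qed

definition "MULT = Pr Zr (Cn ADD [Pj 1, Pj 2])"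
lemma ev_MULT: "recf_eval MULT [n, x] (n * x)"
proof (induction n)
  case 0 show ?case unfolding MULT_def by (rule ev_Pr0) (simp add: ev_Zr)
next
  case (Suc n) show ?case unfolding MULT_def
    by (rule ev_PrS[OF Suc[unfolded MULT_def]], rule ev_eq, rule ev_Cn2, rule ev_ADD, rule ev_P1, rule ev_P2, simp)
qed

definition "PRED = Pr Zr (Pj 0)"
lemma ev_PRED: "recf_eval PRED [n] (n - 1)"
proof (induction n)
  case 0 show ?case unfolding PRED_def by (rule ev_Pr0) (simp add: ev_Zr)
next
  case (Suc m) show ?case unfolding PRED_def
    by (rule ev_eq, rule ev_PrS[OF Suc[unfolded PRED_def]], rule ev_P0, simp)
qed

definition "RSUB = Pr (Pj 0) (Cn PRED [Pj 1])"
lemma ev_RSUB: "recf_eval RSUB [n, x] (x - n)"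
proof (induction n)
  case 0 show ?case unfolding RSUB_def by (rule ev_Pr0) (simp add: ev_P0[of x "[]", simplified])
next
  case (Suc n) show ?case unfolding RSUB_def
    by (rule ev_PrS[OF Suc[unfolded RSUB_def]], rule ev_eq, rule ev_Cn1, rule ev_PRED, rule ev_P1, simp)
qed

definition "SUB = Cn RSUB [Pj 1, Pj 0]"
lemma ev_SUB: "recf_eval SUB [x, y] (x - y)"
  unfolding SUB_def by (rule ev_Cn2, rule ev_RSUB, rule ev_P1, rule ev_P0)

definition "ADIFF = Cn ADD [SUB, Cn SUB [Pj 1, Pj 0]]"
lemma ev_ADIFF: "recf_eval ADIFF [x, y] ((x - y) + (y - x))"
  unfolding ADIFF_def by (rule ev_Cn2, rule ev_ADD, rule ev_SUB, rule ev_Cn2, rule ev_SUB, rule ev_P1, rule ev_P0)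

definition "POW2 = Pr (Cn Sc [Zr]) (Cn ADD [Pj 1, Pj 1])"
lemma ev_POW2: "recf_eval POW2 [n] (2 ^ n)"
proof (induction n)
  case 0 show ?case unfolding POW2_def by (rule ev_Pr0, rule ev_eq, rule ev_ONE[unfolded ONE_def], simp)
next
  case (Suc n) show ?case unfolding POW2_def
    by (rule ev_PrS[OF Suc[unfolded POW2_def]], rule ev_eq, rule ev_Cn2, rule ev_ADD, rule ev_P1, rule ev_P1, simp)
qed

definition "TRI = Pr Zr (Cn Sc [Cn ADD [Pj 0, Pj 1]])"
lemma ev_TRI: "recf_eval TRI [n] (triangle n)"
proof (induction n)
  case 0 show ?case unfolding TRI_def by (rule ev_Pr0) (simp add: ev_Zr)
next
  case (Suc n) show ?case unfolding TRI_def
    by (rule ev_PrS[OF Suc[unfolded TRI_def]], rule ev_eq, rule ev_Cn1,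
        rule ev_Sc, rule ev_Cn2, rule ev_ADD, rule ev_P0, rule ev_P1, simp)
qed

definition "PE = Cn ADD [Cn TRI [ADD], Pj 0]"
lemma ev_PE: "recf_eval PE [m, n] (prod_encode (m, n))"
  unfolding PE_def by (rule ev_eq, rule ev_Cn2, rule ev_ADD, rule ev_Cn1, rule ev_TRI, rule ev_ADD, rule ev_P0, simp add: prod_encode_def)

definition "DBL = Cn ADD [Pj 0, Pj 0]"
lemma ev_DBL: "recf_eval DBL [n] (2 * n)"
  unfolding DBL_def by (rule ev_eq, rule ev_Cn2, rule ev_ADD, rule ev_P0, rule ev_P0, simp)


definition "BR b = (if b then ONE else Zr)"
lemma ev_BR: "recf_eval (BR b) xs (if b then 1 else 0)"
  unfolding BR_def by (cases b) (auto intro: ev_ONE[simplified] ev_Zr)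

definition "EQR b A C = Cn PE [BR b, Cn DBL [Cn PE [A, C]]]"
lemma ev_EQR: "recf_eval A xs a \<Longrightarrow> recf_eval C xs c \<Longrightarrow> recf_eval (EQR b A C) xs (lit_code (b, Eq a c))"
  unfolding EQR_def
  by (rule ev_eq, rule ev_Cn2, rule ev_PE, rule ev_BR, rule ev_Cn1, rule ev_DBL, rule ev_Cn2, rule ev_PE,
      assumption, assumption, simp add: lit_code_def sum_encode_def)

definition "RLR b A C = Cn PE [BR b, Cn Sc [Cn DBL [Cn PE [Zr, Cn Sc [Cn PE [A, Cn Sc [Cn PE [C, Zr]]]]]]]]"
lemma ev_RLR: "recf_eval A xs a \<Longrightarrow> recf_eval C xs c \<Longrightarrow> recf_eval (RLR b A C) xs (lit_code (b, Rl 0 [a, c]))"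
  unfolding RLR_def
  by (rule ev_eq, rule ev_Cn2, rule ev_PE, rule ev_BR, rule ev_Cn1, rule ev_Sc, rule ev_Cn1, rule ev_DBL,
      rule ev_Cn2, rule ev_PE, rule ev_Zr, rule ev_Cn1, rule ev_Sc, rule ev_Cn2, rule ev_PE, assumption,
      rule ev_Cn1, rule ev_Sc, rule ev_Cn2, rule ev_PE, assumption, rule ev_Zr,
      simp add: lit_code_def sum_encode_def)

definition "PCR L1 L2 = Cn PE [Cn POW2 [L1], L2]"
lemma ev_PCR: "recf_eval L1 xs (lit_code l1) \<Longrightarrow> recf_eval L2 xs (lit_code l2) \<Longrightarrow>
   recf_eval (PCR L1 L2) xs (pair_code ({l1}, l2))"
  unfolding PCR_def
  by (rule ev_eq, rule ev_Cn2, rule ev_PE, rule ev_Cn1, rule ev_POW2, assumption, assumption,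
      simp add: pair_code_def set_encode_def)

definition "XS = Cn Sc [Cn ADD [Pj 0, Pj 1]]"
lemma ev_XS: "recf_eval XS (x # y # xs) (Suc (x + y))"
  unfolding XS_def by (rule ev_Cn1, rule ev_Sc[of _ "[]"], rule ev_Cn2, rule ev_ADD, rule ev_P0, rule ev_P1)


definition "c1 x y = pair_code ({(True, Eq x x)}, (True, Eq x x))"
definition "c2 x y = pair_code ({(True, Eq x x)}, (False, Rl 0 [x,x]))"
definition "c3 x y = pair_code ({(False, Eq x (Suc(x+y)))}, (False, Eq x (Suc(x+y))))"
definition "c4 x y = pair_code ({(False, Eq (Suc(x+y)) y)}, (False, Eq (Suc(x+y)) y))"
definition "c5 x y = pair_code ({(False, Eq x (Suc(x+y)))}, (True, Rl 0 [x, Suc(x+y)]))"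
definition "c6 x y = pair_code ({(False, Eq (Suc(x+y)) y)}, (False, Rl 0 [Suc(x+y), y]))"

definition "ad u v = ((u::nat) - v) + (v - u)"
lemma ad_0: "ad u v = 0 \<longleftrightarrow> u = v" unfolding ad_def by auto

definition "Dv x y n = ad (c1 x y) n * (ad (c2 x y) n * (ad (c3 x y) n * (ad (c4 x y) n * (ad (c5 x y) n * ad (c6 x y) n))))"

lemma Dv_0: "Dv x y n = 0 \<longleftrightarrow> n \<in> {c1 x y, c2 x y, c3 x y, c4 x y, c5 x y, c6 x y}"
  unfolding Dv_def by (auto simp: ad_0)

definition "ADR C = Cn ADIFF [C, Pj 2]"
lemma ev_ADR: "recf_eval C (x # y # n # xs) c \<Longrightarrow> recf_eval (ADR C) (x # y # n # xs) (ad c n)"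
  unfolding ADR_def ad_def by (rule ev_Cn2, rule ev_ADIFF, assumption, rule ev_P2)

definition "C1 = PCR (EQR True (Pj 0) (Pj 0)) (EQR True (Pj 0) (Pj 0))"
definition "C2 = PCR (EQR True (Pj 0) (Pj 0)) (RLR False (Pj 0) (Pj 0))"
definition "C3 = PCR (EQR False (Pj 0) XS) (EQR False (Pj 0) XS)"
definition "C4 = PCR (EQR False XS (Pj 1)) (EQR False XS (Pj 1))"
definition "C5 = PCR (EQR False (Pj 0) XS) (RLR True (Pj 0) XS)"
definition "C6 = PCR (EQR False XS (Pj 1)) (RLR False XS (Pj 1))"

lemmas evs = ev_PCR ev_EQR ev_RLR ev_P0 ev_P1 ev_XS

lemma ev_C1: "recf_eval C1 (x # y # xs) (c1 x y)" unfolding C1_def c1_def by (intro evs)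
lemma ev_C2: "recf_eval C2 (x # y # xs) (c2 x y)" unfolding C2_def c2_def by (intro evs)
lemma ev_C3: "recf_eval C3 (x # y # xs) (c3 x y)" unfolding C3_def c3_def by (intro evs)
lemma ev_C4: "recf_eval C4 (x # y # xs) (c4 x y)" unfolding C4_def c4_def by (intro evs)
lemma ev_C5: "recf_eval C5 (x # y # xs) (c5 x y)" unfolding C5_def c5_def by (intro evs)
lemma ev_C6: "recf_eval C6 (x # y # xs) (c6 x y)" unfolding C6_def c6_def by (intro evs)

definition "DR = Cn MULT [ADR C1, Cn MULT [ADR C2, Cn MULT [ADR C3, Cn MULT [ADR C4, Cn MULT [ADR C5, ADR C6]]]]]"
lemma ev_DR: "recf_eval DR [x, y, n] (Dv x y n)"
  unfolding DR_def Dv_def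
  by (intro ev_Cn2[OF ev_MULT] ev_ADR ev_C1 ev_C2 ev_C3 ev_C4 ev_C5 ev_C6)

definition "Qv j x n = (\<Prod>y<j. Dv x y n)"
definition "QR = Pr ONE (Cn MULT [Pj 1, Cn DR [Pj 2, Pj 0, Pj 3]])"
lemma ev_QR: "recf_eval QR [j, x, n] (Qv j x n)"
proof (induction j)
  case 0 show ?case unfolding QR_def Qv_def by (rule ev_Pr0, rule ev_eq, rule ev_ONE, simp)
next
  case (Suc j) show ?case unfolding QR_def
    by (rule ev_PrS[OF Suc[unfolded QR_def]], rule ev_eq, rule ev_Cn2, rule ev_MULT, rule ev_P1,
        rule ev_Cn3, rule ev_DR, rule ev_P2, rule ev_P0, rule ev_P3, simp add: Qv_def)
qed

definition "Rv i m n = (\<Prod>x<i. Qv m x n)"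
definition "RR = Pr ONE (Cn MULT [Pj 1, Cn QR [Pj 2, Pj 0, Pj 3]])"
lemma ev_RR: "recf_eval RR [i, m, n] (Rv i m n)"
proof (induction i)
  case 0 show ?case unfolding RR_def Rv_def by (rule ev_Pr0, rule ev_eq, rule ev_ONE, simp)
next
  case (Suc i) show ?case unfolding RR_def
    by (rule ev_PrS[OF Suc[unfolded RR_def]], rule ev_eq, rule ev_Cn2, rule ev_MULT, rule ev_P1,
        rule ev_Cn3, rule ev_QR, rule ev_P2, rule ev_P0, rule ev_P3, simp add: Rv_def)
qed

definition "TR = Cn RR [Pj 0, Pj 0, Pj 1]"
lemma ev_TR: "recf_eval TR [m, n] (Rv m m n)"
  unfolding TR_def by (rule ev_Cn3, rule ev_RR, rule ev_P0, rule ev_P0, rule ev_P1)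

lemma Rv_0: "Rv m m n = 0 \<longleftrightarrow> (\<exists>x<m. \<exists>y<m. Dv x y n = 0)"
  unfolding Rv_def Qv_def by auto

definition "Cset = {n. \<exists>x y. n \<in> {c1 x y, c2 x y, c3 x y, c4 x y, c5 x y, c6 x y}}"

lemma Cset_Rv: "n \<in> Cset \<longleftrightarrow> (\<exists>m. Rv m m n = 0)"
proof
  assume "n \<in> Cset"
  then obtain x y where "Dv x y n = 0" unfolding Cset_def using Dv_0 by blast
  then have "Rv (Suc (x + y)) (Suc (x + y)) n = 0" unfolding Rv_0 by (meson less_add_Suc1 less_add_Suc2)
  then show "\<exists>m. Rv m m n = 0" ..
next
  assume "\<exists>m. Rv m m n = 0"
  then show "n \<in> Cset" unfolding Rv_0 Cset_def using Dv_0 by blast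
qed

lemma ce_Cset: "ce Cset"
  unfolding ce_def
proof (intro exI[of _ "Mn TR"] set_eqI iffI)
  fix n assume "n \<in> Cset"
  then obtain m where m: "Rv m m n = 0" using Cset_Rv by blast
  define k where "k = (LEAST m. Rv m m n = 0)"
  have k0: "Rv k k n = 0" unfolding k_def by (rule LeastI[of _ m], rule m)
  have kl: "\<forall>m<k. 0 < Rv m m n" unfolding k_def using not_less_Least by auto
  show "n \<in> {n. \<exists>y. recf_eval (Mn TR) [n] y}" unfolding mem_Collect_eq
  proof (rule exI[of _ k], rule ev_Mn)
    show "recf_eval TR [k, n] 0" using ev_TR[of k n] k0 by simp
    show "\<forall>m<k. \<exists>y. recf_eval TR [m, n] y \<and> 0 < y" using kl ev_TR by blast
  qed
next
  fix n assume "n \<in> {n. \<exists>y. recf_eval (Mn TR) [n] y}"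
  then obtain y where "recf_eval (Mn TR) [n] y" by blast
  then have "recf_eval TR [y, n] 0" by (cases rule: recf_eval.cases) auto
  then have "Rv y y n = 0" using ev_TR recf_det by blast
  then show "n \<in> Cset" using Cset_Rv by blast
qed


definition Phi :: "(lit set \<times> lit) set" where
  "Phi = {({(True, Eq a a)}, (True, Eq a a)) | a. True}
       \<union> {({(True, Eq a a)}, (False, Rl 0 [a,a])) | a. True}
       \<union> {({(False, Eq a c)}, (False, Eq a c)) | a c. a \<noteq> c}
       \<union> {({(False, Eq a c)}, (a < c, Rl 0 [a,c])) | a c. a \<noteq> c}"

lemma split_neq: "(a::nat) \<noteq> c \<Longrightarrow> (\<exists>y. c = Suc (a + y)) \<or> (\<exists>x. a = Suc (x + c))"
  by (metis add_Suc_right add.commute less_imp_Suc_add linorder_neqE_nat)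

lemma codes_Phi: "pair_code ` Phi = Cset"
proof
  show "pair_code ` Phi \<subseteq> Cset"
  proof
    fix n assume "n \<in> pair_code ` Phi"
    then obtain p where p: "p \<in> Phi" "n = pair_code p" by blast
    from p(1) show "n \<in> Cset" unfolding Phi_def
    proof (elim UnE CollectE exE conjE)
      fix a assume "p = ({(True, Eq a a)}, (True, Eq a a))"
      then show ?thesis using p(2) unfolding Cset_def c1_def by blast
    next
      fix a assume "p = ({(True, Eq a a)}, (False, Rl 0 [a,a]))"
      then show ?thesis using p(2) unfolding Cset_def c2_def by blast
    next
      fix a c assume pa: "p = ({(False, Eq a c)}, (False, Eq a c))" "a \<noteq> c"
      from split_neq[OF pa(2)] show ?thesis
      proof (elim disjE exE)
        fix y assume "c = Suc (a + y)"
        then show ?thesis using p(2) pa unfolding Cset_def c3_def by blast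
      next
        fix x assume "a = Suc (x + c)"
        then show ?thesis using p(2) pa unfolding Cset_def c4_def by blast
      qed
    next
      fix a c assume pa: "p = ({(False, Eq a c)}, (a < c, Rl 0 [a,c]))" "a \<noteq> c"
      from split_neq[OF pa(2)] show ?thesis
      proof (elim disjE exE)
        fix y assume "c = Suc (a + y)"
        then show ?thesis using p(2) pa unfolding Cset_def c5_def by auto
      next
        fix x assume "a = Suc (x + c)"
        then show ?thesis using p(2) pa unfolding Cset_def c6_def by auto
      qed
    qed
  qed
next
  show "Cset \<subseteq> pair_code ` Phi"
  proof
    fix n assume "n \<in> Cset"
    then obtain x y where "n \<in> {c1 x y, c2 x y, c3 x y, c4 x y, c5 x y, c6 x y}" unfolding Cset_def by blast
    then show "n \<in> pair_code ` Phi"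
    proof (elim insertE)
      assume "n = c1 x y" then show ?thesis unfolding c1_def Phi_def by blast
    next
      assume "n = c2 x y" then show ?thesis unfolding c2_def Phi_def by blast
    next
      assume "n = c3 x y" then show ?thesis unfolding c3_def Phi_def
        by (intro image_eqI[of _ _ "({(False, Eq x (Suc(x+y)))}, (False, Eq x (Suc(x+y))))"]) auto
    next
      assume "n = c4 x y" then show ?thesis unfolding c4_def Phi_def
        by (intro image_eqI[of _ _ "({(False, Eq (Suc(x+y)) y)}, (False, Eq (Suc(x+y)) y))"]) auto
    next
      assume "n = c5 x y" then show ?thesis unfolding c5_def Phi_def
        by (intro image_eqI[of _ _ "({(False, Eq x (Suc(x+y)))}, (x < Suc (x+y), Rl 0 [x, Suc(x+y)]))"]) auto
    next
      assume "n = c6 x y" then show ?thesis unfolding c6_def Phi_def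
        by (intro image_eqI[of _ _ "({(False, Eq (Suc(x+y)) y)}, (Suc (x+y) < y, Rl 0 [Suc(x+y), y]))"]) auto
    qed simp
  qed
qed

lemma ce_Phi: "ce (pair_code ` Phi)" using ce_Cset codes_Phi by simp


definition ordS :: "strc \<Rightarrow> strc" where
  "ordS A = \<lparr> univ = univ A, rel = (\<lambda>i. if i = 0 then {[a, c] | a c. a \<in> univ A \<and> c \<in> univ A \<and> a < c} else {}) \<rparr>"

lemma len2: "length xs = 2 \<longleftrightarrow> (\<exists>a c. xs = [a, c])"
  by (cases xs; cases "tl xs"; auto)

lemma diag_eq: "(True, Eq a c) \<in> diagram L A \<longleftrightarrow> a = c \<and> a \<in> univ A"
  unfolding diagram_def by auto
lemma diag_neq: "(False, Eq a c) \<in> diagram L A \<longleftrightarrow> a \<noteq> c \<and> a \<in> univ A \<and> c \<in> univ A"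
  unfolding diagram_def by auto
lemma diag_rl: "(b, Rl i xs) \<in> diagram L A \<longleftrightarrow> i < length L \<and> xs \<in> tuples (univ A) (L ! i) \<and> (xs \<in> rel A i \<longleftrightarrow> b)"
  unfolding diagram_def by (cases b) auto

lemma apply_Phi: "apply_trans Phi L A = diagram L_FLO (ordS A)"
proof (rule set_eqI)
  fix l :: lit
  obtain b at where l: "l = (b, at)" by (cases l)
  show "l \<in> apply_trans Phi L A \<longleftrightarrow> l \<in> diagram L_FLO (ordS A)"
  proof (cases at)
    case (Eq a c)
    then show ?thesis unfolding l apply_trans_def Phi_def
      by (cases b) (auto simp: diag_eq diag_neq ordS_def)
  next
    case (Rl i xs)
    show ?thesis
    proof
      assume "l \<in> apply_trans Phi L A"
      then obtain \<alpha> where "\<alpha> \<subseteq> diagram L A" "(\<alpha>, (b, Rl i xs)) \<in> Phi" unfolding l Rl apply_trans_def by blast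
      then have "(\<exists>a. \<alpha> = {(True, Eq a a)} \<and> b = False \<and> i = 0 \<and> xs = [a,a])
         \<or> (\<exists>a c. \<alpha> = {(False, Eq a c)} \<and> a \<noteq> c \<and> b = (a < c) \<and> i = 0 \<and> xs = [a,c])"
        unfolding Phi_def by blast
      then show "l \<in> diagram L_FLO (ordS A)" unfolding l Rl
      proof (elim disjE exE conjE)
        fix a assume "\<alpha> = {(True, Eq a a)}" "b = False" "i = 0" "xs = [a,a]"
        then show "(b, Rl i xs) \<in> diagram L_FLO (ordS A)" using \<open>\<alpha> \<subseteq> diagram L A\<close>
          by (simp add: diag_eq diag_rl ordS_def L_FLO_def tuples_def)
      next
        fix a c assume "\<alpha> = {(False, Eq a c)}" "a \<noteq> c" "b = (a < c)" "i = 0" "xs = [a,c]"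
        then show "(b, Rl i xs) \<in> diagram L_FLO (ordS A)" using \<open>\<alpha> \<subseteq> diagram L A\<close>
          by (simp add: diag_neq diag_rl ordS_def L_FLO_def tuples_def)
      qed
    next
      assume "l \<in> diagram L_FLO (ordS A)"
      then have i: "i = 0" and xs: "xs \<in> tuples (univ A) 2" and b: "xs \<in> rel (ordS A) 0 \<longleftrightarrow> b"
        unfolding l Rl diag_rl by (auto simp: L_FLO_def ordS_def)
      then obtain a c where ac: "xs = [a, c]" "a \<in> univ A" "c \<in> univ A" unfolding tuples_def len2 by auto
      have bb: "b = (a < c)" using b ac unfolding ordS_def by auto
      show "l \<in> apply_trans Phi L A"
      proof (cases "a = c")
        case True
        then show ?thesis unfolding l Rl apply_trans_def Phi_def using i ac bb
          by (auto simp: diag_eq)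
      next
        case False
        then show ?thesis unfolding l Rl apply_trans_def Phi_def using i ac bb
          by (auto simp: diag_neq)
      qed
    qed
  qed
qed


lemma iso_sym: assumes "iso L A B" shows "iso L B A"
proof -
  obtain f where f: "bij_betw f (univ A) (univ B)"
    "\<forall>i<length L. \<forall>xs\<in>tuples (univ A) (L ! i). xs \<in> rel A i \<longleftrightarrow> map f xs \<in> rel B i"
    using assms unfolding iso_def by blast
  define g where "g = inv_into (univ A) f"
  have g: "bij_betw g (univ B) (univ A)" unfolding g_def by (rule bij_betw_inv_into[OF f(1)])
  have fg: "\<forall>y\<in>univ B. f (g y) = y" unfolding g_def using f(1) by (simp add: bij_betw_inv_into_right)
  show ?thesis unfolding iso_def
  proof (intro exI[of _ g] conjI allI impI ballI)
    show "bij_betw g (univ B) (univ A)" by (rule g)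
    fix i xs assume i: "i < length L" and xs: "xs \<in> tuples (univ B) (L ! i)"
    have gx: "map g xs \<in> tuples (univ A) (L ! i)" using xs g unfolding tuples_def bij_betw_def by auto
    have "map f (map g xs) = xs" using xs fg unfolding tuples_def by (auto intro!: map_idI)
    then show "xs \<in> rel B i \<longleftrightarrow> map g xs \<in> rel A i" using f(2) i gx by metis
  qed
qed

lemma iso_trans: assumes "iso L A B" "iso L B C" shows "iso L A C"
proof -
  obtain f where f: "bij_betw f (univ A) (univ B)"
    "\<forall>i<length L. \<forall>xs\<in>tuples (univ A) (L ! i). xs \<in> rel A i \<longleftrightarrow> map f xs \<in> rel B i"
    using assms unfolding iso_def by blast
  obtain g where g: "bij_betw g (univ B) (univ C)"
    "\<forall>i<length L. \<forall>xs\<in>tuples (univ B) (L ! i). xs \<in> rel B i \<longleftrightarrow> map g xs \<in> rel C i"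
    using assms unfolding iso_def by blast
  show ?thesis unfolding iso_def
  proof (intro exI[of _ "g \<circ> f"] conjI allI impI ballI)
    show "bij_betw (g \<circ> f) (univ A) (univ C)" by (rule bij_betw_trans[OF f(1) g(1)])
    fix i xs assume i: "i < length L" and xs: "xs \<in> tuples (univ A) (L ! i)"
    have fx: "map f xs \<in> tuples (univ B) (L ! i)" using xs f(1) unfolding tuples_def bij_betw_def by auto
    show "xs \<in> rel A i \<longleftrightarrow> map (g \<circ> f) xs \<in> rel C i" using f(2) g(2) i xs fx by simp
  qed
qed

lemma iso_card: "iso L A B \<Longrightarrow> card (univ A) = card (univ B)"
  unfolding iso_def using bij_betw_same_card by blast
lemma iso_finite: "iso L A B \<Longrightarrow> finite (univ A) \<longleftrightarrow> finite (univ B)"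
  unfolding iso_def using bij_betw_finite by blast

lemma PF_facts: assumes "A \<in> PF"
  shows "is_struct L_PF A" "finite (univ A)" "iso L_PF (Zp (card (univ A))) A" "prime (card (univ A))"
proof -
  obtain p where p: "prime p" "iso L_PF (Zp p) A" and s: "is_struct L_PF A" using assms unfolding PF_def by blast
  have c: "card (univ A) = p" using iso_card[OF p(2)] by (simp add: Zp_def)
  show "is_struct L_PF A" by fact
  show "finite (univ A)" using iso_finite[OF p(2)] by (simp add: Zp_def)
  show "iso L_PF (Zp (card (univ A))) A" using p c by simp
  show "prime (card (univ A))" using p c by simp
qed

lemma diag_iso: assumes "is_struct L B" "is_struct L C" "diagram L B = diagram L C" shows "iso L B C"
proof -
  have u: "univ B = univ C"
  proof (rule set_eqI)
    fix a show "a \<in> univ B \<longleftrightarrow> a \<in> univ C" using diag_eq[of a a L B] diag_eq[of a a L C] assms(3) by simp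
  qed
  have r: "\<forall>i<length L. \<forall>xs\<in>tuples (univ B) (L ! i). xs \<in> rel B i \<longleftrightarrow> xs \<in> rel C i"
  proof (intro allI impI ballI)
    fix i xs assume "i < length L" "xs \<in> tuples (univ B) (L ! i)"
    then show "xs \<in> rel B i \<longleftrightarrow> xs \<in> rel C i" using assms(3) diag_rl[of True i xs L B] diag_rl[of True i xs L C] u by simp
  qed
  show ?thesis unfolding iso_def using u r by (intro exI[of _ id]) (auto simp: bij_betw_def)
qed

lemma ord_iso: assumes "finite (U::nat set)" "finite V" "card U = card (V::nat set)"
  shows "\<exists>f. bij_betw f U V \<and> (\<forall>a\<in>U. \<forall>b\<in>U. a < b \<longleftrightarrow> f a < f b)"
proof -
  define xs where "xs = sorted_list_of_set U"
  define ys where "ys = sorted_list_of_set V"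
  have lx: "length xs = card U" and ly: "length ys = card U" unfolding xs_def ys_def using assms by simp_all
  have sx: "sorted_wrt (<) xs" and sy: "sorted_wrt (<) ys" unfolding xs_def ys_def by simp_all
  have bx: "bij_betw ((!) xs) {..<card U} U"
    by (rule bij_betw_nth) (use assms lx in \<open>auto simp: xs_def\<close>)
  have by': "bij_betw ((!) ys) {..<card U} V"
    by (rule bij_betw_nth) (use assms ly in \<open>auto simp: ys_def\<close>)
  define h where "h = inv_into {..<card U} ((!) xs)"
  have bh: "bij_betw h U {..<card U}" unfolding h_def by (rule bij_betw_inv_into[OF bx])
  have hx: "\<forall>a\<in>U. xs ! (h a) = a" unfolding h_def using bx by (simp add: bij_betw_inv_into_right)
  have monox: "\<And>i j. i < card U \<Longrightarrow> j < card U \<Longrightarrow> i < j \<longleftrightarrow> xs ! i < xs ! j"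
    proof -
    fix i j assume "i < card U" "j < card U"
    then show "i < j \<longleftrightarrow> xs ! i < xs ! j"
      using sorted_wrt_nth_less[OF sx, of i j] sorted_wrt_nth_less[OF sx, of j i] lx
      by (cases i j rule: linorder_cases) auto
  qed
  have monoy: "\<And>i j. i < card U \<Longrightarrow> j < card U \<Longrightarrow> i < j \<longleftrightarrow> ys ! i < ys ! j"
    proof -
    fix i j assume "i < card U" "j < card U"
    then show "i < j \<longleftrightarrow> ys ! i < ys ! j"
      using sorted_wrt_nth_less[OF sy, of i j] sorted_wrt_nth_less[OF sy, of j i] ly
      by (cases i j rule: linorder_cases) auto
  qed
  show ?thesis
  proof (intro exI[of _ "(!) ys \<circ> h"] conjI ballI)
    show "bij_betw ((!) ys \<circ> h) U V" by (rule bij_betw_trans[OF bh by'])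
    fix a b assume a: "a \<in> U" and b: "b \<in> U"
    have ha: "h a < card U" and hb: "h b < card U" using bh a b unfolding bij_betw_def by auto
    show "a < b \<longleftrightarrow> ((!) ys \<circ> h) a < ((!) ys \<circ> h) b"
      using monox[OF ha hb] monoy[OF ha hb] hx a b by simp
  qed
qed

lemma ordS_struct: "univ A \<noteq> {} \<Longrightarrow> is_struct L_FLO (ordS A)"
  unfolding is_struct_def ordS_def L_FLO_def tuples_def by auto

lemma ordS_mem: "[a, b] \<in> rel (ordS A) 0 \<longleftrightarrow> a \<in> univ A \<and> b \<in> univ A \<and> a < b"
  by (auto simp: ordS_def)
lemma ordS_univ: "univ (ordS A) = univ A" by (simp add: ordS_def)

lemma ordS_FLO: "univ A \<noteq> {} \<Longrightarrow> finite (univ A) \<Longrightarrow> ordS A \<in> FLO"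
  unfolding FLO_def mem_Collect_eq ordS_mem ordS_univ using ordS_struct by auto

lemma ordS_iso: assumes "finite (univ A)" "finite (univ A')" "card (univ A) = card (univ A')"
  shows "iso L_FLO (ordS A) (ordS A')"
proof -
  obtain f where f: "bij_betw f (univ A) (univ A')" "\<forall>a\<in>univ A. \<forall>b\<in>univ A. a < b \<longleftrightarrow> f a < f b"
    using ord_iso[OF assms] by blast
  show ?thesis unfolding iso_def
  proof (intro exI[of _ f] conjI allI impI ballI)
    show "bij_betw f (univ (ordS A)) (univ (ordS A'))" using f(1) by (simp only: ordS_univ)
    fix i xs assume i: "i < length L_FLO" and xs: "xs \<in> tuples (univ (ordS A)) (L_FLO ! i)"
    have i0: "i = 0" using i by (simp add: L_FLO_def)
    have l2: "length xs = 2" "set xs \<subseteq> univ A" using xs by (simp_all add: i0 L_FLO_def ordS_univ tuples_def)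
    obtain a c where ac0: "xs = [a, c]" using len2[THEN iffD1, OF l2(1)] by blast
    have ac: "xs = [a, c]" "a \<in> univ A" "c \<in> univ A" using ac0 l2(2) by simp_all
    have "f a \<in> univ A'" "f c \<in> univ A'" using f(1) ac(2,3) by (meson bij_betwE)+
    then show "xs \<in> rel (ordS A) i \<longleftrightarrow> map f xs \<in> rel (ordS A') i"
      using ac f(2) i0 by (simp add: ordS_mem)
  qed
qed

lemma struct_F: "is_struct L_PF \<lparr>univ = {a, c}, rel = (\<lambda>_. {})\<rparr>"
  unfolding is_struct_def by auto

lemma positive: "c_le PF L_PF FLO L_FLO"
  unfolding c_le_def comp_emb_def comp_trans_def
proof (intro exI[of _ Phi] conjI ballI impI)
  show "ce (pair_code ` Phi)" by (rule ce_Phi)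
next
  fix x assume "x \<in> Phi"
  then show "case x of (\<alpha>, \<phi>) \<Rightarrow> finite \<alpha> \<and>
        (\<exists>F. is_struct L_PF F \<and> finite (univ F) \<and> \<alpha> \<subseteq> diagram L_PF F) \<and> lang_lit L_FLO \<phi>"
  proof -
    have "(\<exists>a. x = ({(True, Eq a a)}, (True, Eq a a)) \<or> x = ({(True, Eq a a)}, (False, Rl 0 [a,a])))
        \<or> (\<exists>a c b. x = ({(False, Eq a c)}, (b, Eq a c)) \<and> a \<noteq> c)
        \<or> (\<exists>a c b. x = ({(False, Eq a c)}, (b, Rl 0 [a,c])) \<and> a \<noteq> c)"
      using \<open>x \<in> Phi\<close> unfolding Phi_def by blast
    then show ?thesis
    proof (elim disjE exE conjE)
      fix a assume "x = ({(True, Eq a a)}, (True, Eq a a))"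
      then show ?thesis using struct_F[of a a]
        by (auto simp: diag_eq intro!: exI[of _ "\<lparr>univ = {a, a}, rel = (\<lambda>_. {})\<rparr>"])
    next
      fix a assume "x = ({(True, Eq a a)}, (False, Rl 0 [a,a]))"
      then show ?thesis using struct_F[of a a]
        by (auto simp: diag_eq L_FLO_def intro!: exI[of _ "\<lparr>univ = {a, a}, rel = (\<lambda>_. {})\<rparr>"])
    next
      fix a c b assume "x = ({(False, Eq a c)}, (b, Eq a c))" "a \<noteq> c"
      then show ?thesis using struct_F[of a c]
        by (auto simp: diag_neq intro!: exI[of _ "\<lparr>univ = {a, c}, rel = (\<lambda>_. {})\<rparr>"])
    next
      fix a c b assume "x = ({(False, Eq a c)}, (b, Rl 0 [a,c]))" "a \<noteq> c"
      then show ?thesis using struct_F[of a c]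
        by (auto simp: diag_neq L_FLO_def intro!: exI[of _ "\<lparr>univ = {a, c}, rel = (\<lambda>_. {})\<rparr>"])
    qed
  qed
next
  fix A assume A: "A \<in> PF"
  have "univ A \<noteq> {}" using PF_facts(1)[OF A] unfolding is_struct_def by blast
  then show "\<exists>B\<in>FLO. apply_trans Phi L_PF A = diagram L_FLO B"
    using ordS_FLO PF_facts(2)[OF A] apply_Phi by blast
next
  fix A A' B B' assume A: "A \<in> PF" "A' \<in> PF" "B \<in> FLO" "B' \<in> FLO"
    and e: "apply_trans Phi L_PF A = diagram L_FLO B" "apply_trans Phi L_PF A' = diagram L_FLO B'"
  have ne: "univ A \<noteq> {}" "univ A' \<noteq> {}" using PF_facts(1)[OF A(1)] PF_facts(1)[OF A(2)] unfolding is_struct_def by blast+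
  have sB: "is_struct L_FLO B" "is_struct L_FLO B'" using A(3,4) unfolding FLO_def by auto
  have i1: "iso L_FLO B (ordS A)" by (rule diag_iso[OF sB(1) ordS_struct[OF ne(1)]]) (use e apply_Phi in simp)
  have i2: "iso L_FLO B' (ordS A')" by (rule diag_iso[OF sB(2) ordS_struct[OF ne(2)]]) (use e apply_Phi in simp)
  have fin: "finite (univ A)" "finite (univ A')" using PF_facts(2) A by auto
  show "iso L_PF A A' \<longleftrightarrow> iso L_FLO B B'"
  proof
    assume "iso L_PF A A'"
    then have "card (univ A) = card (univ A')" by (rule iso_card)
    then have "iso L_FLO (ordS A) (ordS A')" using ordS_iso fin by blast
    then show "iso L_FLO B B'" using iso_trans[OF iso_trans[OF i1] iso_sym[OF i2]] by blast
  next
    assume "iso L_FLO B B'"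
    then have "iso L_FLO (ordS A) (ordS A')" using iso_trans[OF iso_trans[OF iso_sym[OF i1]] i2] by blast
    then have c: "card (univ A) = card (univ A')" using iso_card[of L_FLO "ordS A" "ordS A'"] by (simp add: ordS_def)
    show "iso L_PF A A'" using iso_trans[OF iso_sym[OF PF_facts(3)[OF A(1)]]] PF_facts(3)[OF A(2)] c by simp
  qed
qed


definition "LO n = ordS \<lparr>univ = {0..<n}, rel = (\<lambda>_. {})\<rparr>"

lemma LO_FLO: "0 < n \<Longrightarrow> LO n \<in> FLO"
  unfolding LO_def by (rule ordS_FLO) auto

lemma LO_diag: "diagram L_FLO (LO 1) \<subseteq> diagram L_FLO (LO 2)"
  unfolding diagram_def LO_def ordS_def tuples_def L_FLO_def by (auto simp: subset_iff; fastforce)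

lemma apply_mono: "diagram L A \<subseteq> diagram L A' \<Longrightarrow> apply_trans \<Phi> L A \<subseteq> apply_trans \<Phi> L A'"
  unfolding apply_trans_def by blast

lemma iso_Zp_rel:
  assumes "iso L_PF (Zp p) B"
  obtains g where "bij_betw g {0..<p} (univ B)"
    "\<And>i xs. i < 4 \<Longrightarrow> xs \<in> tuples {0..<p} (L_PF ! i) \<Longrightarrow> xs \<in> rel (Zp p) i \<longleftrightarrow> map g xs \<in> rel B i"
  using assms unfolding iso_def by (auto simp: Zp_def L_PF_def)

lemma Zp0: "[a, b, c] \<in> rel (Zp p) 0 \<longleftrightarrow> a < p \<and> b < p \<and> c = (a + b) mod p"
  by (auto simp: Zp_def)
lemma Zp3: "[a] \<in> rel (Zp p) 3 \<longleftrightarrow> a = 1"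
  by (auto simp: Zp_def)

lemma tup3: "[a,b,c] \<in> tuples U 3 \<longleftrightarrow> a \<in> U \<and> b \<in> U \<and> c \<in> U" by (auto simp: tuples_def)
lemma tup1: "[a] \<in> tuples U (Suc 0) \<longleftrightarrow> a \<in> U" by (auto simp: tuples_def)

lemma bij_pre: "bij_betw g {0..<(q::nat)} U \<Longrightarrow> u \<in> U \<Longrightarrow> \<exists>j<q. g j = u"
proof -
  assume "bij_betw g {0..<q} U" "u \<in> U"
  then have "u \<in> g ` {0..<q}" by (simp add: bij_betw_def)
  then show ?thesis by auto
qed
lemma bij_img: "bij_betw g {0..<(q::nat)} U \<Longrightarrow> j < q \<Longrightarrow> g j \<in> U"
  unfolding bij_betw_def by auto

lemma PF_sub:
  assumes B1: "B1 \<in> PF" and B2: "B2 \<in> PF" and d: "diagram L_PF B1 \<subseteq> diagram L_PF B2"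
  shows "iso L_PF B1 B2"
proof -
  define p where "p = card (univ B1)"
  define q where "q = card (univ B2)"
  have pp: "prime p" "iso L_PF (Zp p) B1" using PF_facts[OF B1] p_def by auto
  have qq: "prime q" "iso L_PF (Zp q) B2" using PF_facts[OF B2] q_def by auto
  have p1: "1 < p" using pp(1) prime_gt_1_nat by blast
  have q1: "1 < q" using qq(1) prime_gt_1_nat by blast
  obtain h where h: "bij_betw h {0..<p} (univ B1)"
    "\<And>i xs. i < 4 \<Longrightarrow> xs \<in> tuples {0..<p} (L_PF ! i) \<Longrightarrow> xs \<in> rel (Zp p) i \<longleftrightarrow> map h xs \<in> rel B1 i"
    using iso_Zp_rel[OF pp(2)] by blast
  obtain g where g: "bij_betw g {0..<q} (univ B2)"
    "\<And>i xs. i < 4 \<Longrightarrow> xs \<in> tuples {0..<q} (L_PF ! i) \<Longrightarrow> xs \<in> rel (Zp q) i \<longleftrightarrow> map g xs \<in> rel B2 i"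
    using iso_Zp_rel[OF qq(2)] by blast
  have U12: "univ B1 \<subseteq> univ B2"
  proof
    fix a assume "a \<in> univ B1"
    then have "(True, Eq a a) \<in> diagram L_PF B1" by (simp add: diag_eq)
    then have "(True, Eq a a) \<in> diagram L_PF B2" by (rule subsetD[OF d])
    then show "a \<in> univ B2" by (simp add: diag_eq)
  qed
  have relsub: "\<And>i xs. i < 4 \<Longrightarrow> xs \<in> tuples (univ B1) (L_PF ! i) \<Longrightarrow> xs \<in> rel B1 i \<Longrightarrow> xs \<in> rel B2 i"
  proof -
    fix i xs assume "i < 4" "xs \<in> tuples (univ B1) (L_PF ! i)" "xs \<in> rel B1 i"
    then have "(True, Rl i xs) \<in> diagram L_PF B1" by (simp add: diag_rl L_PF_def)
    then have "(True, Rl i xs) \<in> diagram L_PF B2" by (rule subsetD[OF d])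
    then show "xs \<in> rel B2 i" by (simp add: diag_rl)
  qed
  have h1: "h 1 \<in> univ B1" using bij_img[OF h(1) p1] .
  have "[h 1] \<in> rel B1 3" using h(2)[of 3 "[1]"] p1 by (simp add: Zp3 L_PF_def tup1)
  then have "[h 1] \<in> rel B2 3" using relsub[of 3 "[h 1]"] h1 by (simp add: L_PF_def tup1)
  moreover obtain u where u: "u < q" "g u = h 1" using bij_pre[OF g(1)] h1 U12 by blast
  ultimately have "[u] \<in> rel (Zp q) 3" using g(2)[of 3 "[u]"] by (simp add: L_PF_def tup1)
  then have gh1: "g 1 = h 1" using u Zp3 by simp
  have clos: "\<And>a b. a \<in> univ B1 \<Longrightarrow> b \<in> univ B1 \<Longrightarrow> \<exists>c\<in>univ B1. [a, b, c] \<in> rel B2 0"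
  proof -
    fix a b assume ab: "a \<in> univ B1" "b \<in> univ B1"
    obtain a' b' where a': "a' < p" "h a' = a" "b' < p" "h b' = b" using bij_pre[OF h(1)] ab by metis
    have c: "h ((a' + b') mod p) \<in> univ B1" using p1 by (intro bij_img[OF h(1)]) simp
    have "[a, b, h ((a' + b') mod p)] \<in> rel B1 0" using h(2)[of 0 "[a', b', (a' + b') mod p]"] a' p1
      by (simp add: Zp0 L_PF_def tup3)
    then have "[a, b, h ((a' + b') mod p)] \<in> rel B2 0" using relsub[of 0] ab c by (simp add: L_PF_def tup3)
    then show "\<exists>c\<in>univ B1. [a, b, c] \<in> rel B2 0" using c by blast
  qed
  have func: "\<And>k c. k < q \<Longrightarrow> c \<in> univ B2 \<Longrightarrow> [g k, g 1, c] \<in> rel B2 0 \<Longrightarrow> c = g ((k + 1) mod q)"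
  proof -
    fix k c assume k: "k < q" "c \<in> univ B2" "[g k, g 1, c] \<in> rel B2 0"
    obtain c' where c': "c' < q" "g c' = c" using bij_pre[OF g(1) k(2)] by blast
    have "[k, 1, c'] \<in> rel (Zp q) 0" using g(2)[of 0 "[k, 1, c']"] k c' q1 by (simp add: L_PF_def tup3)
    then show "c = g ((k + 1) mod q)" using c' Zp0 by simp
  qed
  have ind: "\<And>k. g (Suc k mod q) \<in> univ B1"
  proof -
    fix k show "g (Suc k mod q) \<in> univ B1"
    proof (induction k)
      case 0 then show ?case using gh1 h1 q1 by simp
    next
      case (Suc k)
      define j where "j = Suc k mod q"
      have j: "j < q" unfolding j_def using q1 by simp
      obtain c where c: "c \<in> univ B1" "[g j, g 1, c] \<in> rel B2 0" using clos[of "g j" "g 1"] Suc gh1 h1 j_def by auto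
      have "c = g ((j + 1) mod q)" using func[OF j _ c(2)] c(1) U12 by blast
      moreover have "(j + 1) mod q = Suc (Suc k) mod q" unfolding j_def by (simp add: mod_Suc_eq)
      ultimately show ?case using c(1) by simp
    qed
  qed
  have U21: "univ B2 \<subseteq> univ B1"
  proof
    fix u assume "u \<in> univ B2"
    then obtain j where j: "j < q" "g j = u" using bij_pre[OF g(1)] by blast
    have "Suc (j + q - 1) mod q = j" using j q1 by simp
    then show "u \<in> univ B1" using ind[of "j + q - 1"] j by simp
  qed
  have U: "univ B1 = univ B2" using U12 U21 by blast
  have "diagram L_PF B1 = diagram L_PF B2"
  proof (rule antisym[OF d], rule subsetI)
    fix l assume l: "l \<in> diagram L_PF B2"
    obtain b at where lb: "l = (b, at)" by (cases l)
    show "l \<in> diagram L_PF B1"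
    proof (cases at)
      case (Eq a c) then show ?thesis using l lb U by (cases b) (auto simp: diag_eq diag_neq)
    next
      case (Rl i xs)
      have i: "i < length L_PF" "xs \<in> tuples (univ B1) (L_PF ! i)" and bb: "xs \<in> rel B2 i \<longleftrightarrow> b"
        using l unfolding lb Rl diag_rl U by auto
      have "(xs \<in> rel B1 i, Rl i xs) \<in> diagram L_PF B1" using i by (simp add: diag_rl)
      then have "(xs \<in> rel B1 i, Rl i xs) \<in> diagram L_PF B2" using d by blast
      then have "(xs \<in> rel B2 i) = (xs \<in> rel B1 i)" by (simp add: diag_rl)
      then show ?thesis using i bb unfolding lb Rl by (simp add: diag_rl)
    qed
  qed
  then show ?thesis using diag_iso[OF PF_facts(1)[OF B1] PF_facts(1)[OF B2]] by blast
qed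

lemma negative: "\<not> c_le FLO L_FLO PF L_PF"
proof
  assume "c_le FLO L_FLO PF L_PF"
  then obtain \<Phi> where e: "comp_emb FLO L_FLO PF L_PF \<Phi>" unfolding c_le_def by blast
  have ct: "comp_trans FLO L_FLO PF L_PF \<Phi>" using e unfolding comp_emb_def by (rule conjunct1)
  have em: "\<forall>A\<in>FLO. \<forall>A'\<in>FLO. \<forall>B\<in>PF. \<forall>B'\<in>PF.
        apply_trans \<Phi> L_FLO A = diagram L_PF B \<longrightarrow> apply_trans \<Phi> L_FLO A' = diagram L_PF B' \<longrightarrow>
        (iso L_FLO A A' \<longleftrightarrow> iso L_PF B B')" using e unfolding comp_emb_def by (rule conjunct2)
  have tr: "\<forall>A\<in>FLO. \<exists>B\<in>PF. apply_trans \<Phi> L_FLO A = diagram L_PF B"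
    using ct unfolding comp_trans_def by (elim conjE)
  have F1: "LO 1 \<in> FLO" and F2: "LO 2 \<in> FLO" using LO_FLO by auto
  obtain B1 where B1: "B1 \<in> PF" "apply_trans \<Phi> L_FLO (LO 1) = diagram L_PF B1"
    using tr F1 by blast
  obtain B2 where B2: "B2 \<in> PF" "apply_trans \<Phi> L_FLO (LO 2) = diagram L_PF B2"
    using tr F2 by blast
  have "diagram L_PF B1 \<subseteq> diagram L_PF B2" using apply_mono[OF LO_diag, of \<Phi>] B1(2) B2(2) by simp
  then have "iso L_PF B1 B2" using PF_sub B1(1) B2(1) by blast
  then have "iso L_FLO (LO 1) (LO 2)" using em F1 F2 B1 B2 by blast
  then have "card (univ (LO 1)) = card (univ (LO 2))" by (rule iso_card)
  then show False by (simp add: LO_def ordS_def)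
qed

theorem proposition2p1:
  shows "c_le PF L_PF FLO L_FLO \<and> \<not> c_le FLO L_FLO PF L_PF"
  using positive negative by blast

end
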